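(* Let $V^*=V\cup V^{\mathrm{abs}}$ be a finite set and $\{\eta(t),t\ge0\}$ a consistent configuration process on $V^*$ with generator $\mathcal L^{\mathrm{abs}}=\mathcal L+\mathcal H$. Let $\mathbf x=(x_1,\dots,x_n)\in(V^* )^n$. Then for all $v\in V^{\mathrm{abs}}$, $$\mathbb E_{\phi(\mathbf x)}[\eta_v(\infty)]=\sum_{j=1}^n\mathbf P_{x_j}\big(X^{\mathrm{rw}}(\infty)=v\big),$$ where $\mathbf P_u$ is the law of the random walk $X^{\mathrm{rw}}$ on $V^*$ associated to $\{\eta(t)\}$, started at $u$.
   Context: $V^{\mathrm{abs}}=V^*\setminus V$, rates $r(i,j)\ge0$ for $i\in V$, $j\in V^{\mathrm{abs}}$. $\mathcal L$ generates a configuration process on $V$ (single-site space $\Lambda\subseteq\mathbb N_0$), acting only on $(\eta_i)_{i\in V}$; $\mathcal Hf(\eta)=\sum_{i\in V,j\in V^{\mathrm{abs}}}r(i,j)\eta_i[f(\eta-\delta_i+\delta_j)-f(\eta)]$. Consistency: $[\mathcal L^{\mathrm{abs}},\mathcal A]=0$, $\mathcal Af(\eta)=\sum_{x\in V^*}\eta_xf(\eta-\delta_x)$. $\phi(\mathbf y)=\sum_i\delta_{y_i}$. The associated random walk is defined by: if $\eta(0)=\delta_u$ then $\eta(t)=\delta_{X^{\mathrm{rw}}(t)}$, $X^{\mathrm{rw}}(0)=u$. Quantities at time $\infty$ are limits as $t\to\infty$ of the corresponding quantities at time $t$. *)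

theory Defs
  imports Complex_Main
begin

type_synonym 'a cfg = "'a \<Rightarrow> nat"

definition restr :: "'a set \<Rightarrow> 'a cfg \<Rightarrow> 'a cfg" where
  "restr V \<eta> = (\<lambda>i. if i \<in> V then \<eta> i else 0)"

definition dlt :: "'a \<Rightarrow> 'a cfg" where
  "dlt u = (\<lambda>i. if i = u then 1 else 0)"

definition phi :: "'a list \<Rightarrow> 'a cfg" where
  "phi xs = (\<lambda>i. length (filter (\<lambda>y. y = i) xs))"

text \<open>Configurations on Vs (zero outside Vs) with single-site values in Lambda on V;
  absorbing sites (Vs - V) may hold any number of particles.\<close>
definition ConfSpace :: "'a set \<Rightarrow> 'a set \<Rightarrow> nat set \<Rightarrow> 'a cfg set" where
  "ConfSpace Vs V \<Lambda> = {\<eta>. (\<forall>i. i \<notin> Vs \<longrightarrow> \<eta> i = 0) \<and> (\<forall>i\<in>V. \<eta> i \<in> \<Lambda>)}"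

definition sector :: "'a set \<Rightarrow> 'a set \<Rightarrow> nat set \<Rightarrow> nat \<Rightarrow> 'a cfg set" where
  "sector Vs V \<Lambda> k = {\<eta> \<in> ConfSpace Vs V \<Lambda>. (\<Sum>i\<in>Vs. \<eta> i) = k}"

definition rateL :: "'a set \<Rightarrow> ('a cfg \<Rightarrow> 'a cfg \<Rightarrow> real) \<Rightarrow> 'a cfg \<Rightarrow> 'a cfg \<Rightarrow> real" where
  "rateL V c \<eta> \<xi> = (if (\<forall>i. i \<notin> V \<longrightarrow> \<xi> i = \<eta> i) then c (restr V \<eta>) (restr V \<xi>) else 0)"

definition rateH :: "'a set \<Rightarrow> 'a set \<Rightarrow> ('a \<Rightarrow> 'a \<Rightarrow> real) \<Rightarrow> 'a cfg \<Rightarrow> 'a cfg \<Rightarrow> real" where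
  "rateH Vs V r \<eta> \<xi> =
     (\<Sum>i\<in>V. \<Sum>j\<in>Vs - V. if \<xi> = (\<lambda>k. \<eta> k - dlt i k + dlt j k) then r i j * real (\<eta> i) else 0)"

definition rateAbs :: "'a set \<Rightarrow> 'a set \<Rightarrow> ('a cfg \<Rightarrow> 'a cfg \<Rightarrow> real) \<Rightarrow> ('a \<Rightarrow> 'a \<Rightarrow> real)
    \<Rightarrow> 'a cfg \<Rightarrow> 'a cfg \<Rightarrow> real" where
  "rateAbs Vs V c r \<eta> \<xi> = rateL V c \<eta> \<xi> + rateH Vs V r \<eta> \<xi>"

definition genAbs :: "'a set \<Rightarrow> 'a set \<Rightarrow> nat set \<Rightarrow> ('a cfg \<Rightarrow> 'a cfg \<Rightarrow> real)
    \<Rightarrow> ('a \<Rightarrow> 'a \<Rightarrow> real) \<Rightarrow> ('a cfg \<Rightarrow> real) \<Rightarrow> 'a cfg \<Rightarrow> real" where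
  "genAbs Vs V \<Lambda> c r f \<eta> =
     (\<Sum>\<xi>\<in>sector Vs V \<Lambda> (\<Sum>i\<in>Vs. \<eta> i). rateAbs Vs V c r \<eta> \<xi> * (f \<xi> - f \<eta>))"

definition Aop :: "'a set \<Rightarrow> ('a cfg \<Rightarrow> real) \<Rightarrow> 'a cfg \<Rightarrow> real" where
  "Aop Vs f \<eta> = (\<Sum>x\<in>Vs. real (\<eta> x) * f (\<lambda>k. \<eta> k - dlt x k))"

definition genMat :: "'a set \<Rightarrow> 'a set \<Rightarrow> ('a cfg \<Rightarrow> 'a cfg \<Rightarrow> real) \<Rightarrow> ('a \<Rightarrow> 'a \<Rightarrow> real)
    \<Rightarrow> 'a cfg set \<Rightarrow> 'a cfg \<Rightarrow> 'a cfg \<Rightarrow> real" where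
  "genMat Vs V c r S \<eta> \<xi> =
     (if \<eta> = \<xi> then - (\<Sum>\<zeta>\<in>S - {\<eta>}. rateAbs Vs V c r \<eta> \<zeta>) else rateAbs Vs V c r \<eta> \<xi>)"

fun mpow :: "'s set \<Rightarrow> ('s \<Rightarrow> 's \<Rightarrow> real) \<Rightarrow> nat \<Rightarrow> 's \<Rightarrow> 's \<Rightarrow> real" where
  "mpow S M 0 x y = (if x = y then 1 else 0)"
| "mpow S M (Suc k) x y = (\<Sum>z\<in>S. M x z * mpow S M k z y)"

definition expM :: "'s set \<Rightarrow> ('s \<Rightarrow> 's \<Rightarrow> real) \<Rightarrow> real \<Rightarrow> 's \<Rightarrow> 's \<Rightarrow> real" where
  "expM S M t x y = (\<Sum>k. t ^ k / fact k * mpow S M k x y)"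

text \<open>Transition probabilities P_eta(eta(t) = xi) of the configuration process with generator
  L^abs; the process conserves the particle number, so it lives on the finite sector of eta.\<close>
definition trans :: "'a set \<Rightarrow> 'a set \<Rightarrow> nat set \<Rightarrow> ('a cfg \<Rightarrow> 'a cfg \<Rightarrow> real) \<Rightarrow> ('a \<Rightarrow> 'a \<Rightarrow> real)
    \<Rightarrow> real \<Rightarrow> 'a cfg \<Rightarrow> 'a cfg \<Rightarrow> real" where
  "trans Vs V \<Lambda> c r t \<eta> \<xi> =
     (let S = sector Vs V \<Lambda> (\<Sum>i\<in>Vs. \<eta> i) in expM S (genMat Vs V c r S) t \<eta> \<xi>)"

definition expect :: "'a set \<Rightarrow> 'a set \<Rightarrow> nat set \<Rightarrow> ('a cfg \<Rightarrow> 'a cfg \<Rightarrow> real) \<Rightarrow> ('a \<Rightarrow> 'a \<Rightarrow> real)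
    \<Rightarrow> real \<Rightarrow> 'a cfg \<Rightarrow> ('a cfg \<Rightarrow> real) \<Rightarrow> real" where
  "expect Vs V \<Lambda> c r t \<eta> f =
     (\<Sum>\<xi>\<in>sector Vs V \<Lambda> (\<Sum>i\<in>Vs. \<eta> i). trans Vs V \<Lambda> c r t \<eta> \<xi> * f \<xi>)"

text \<open>Associated random walk: P_u(X(t) = w) = P_{delta_u}(eta(t) = delta_w).\<close>
definition rwProb :: "'a set \<Rightarrow> 'a set \<Rightarrow> nat set \<Rightarrow> ('a cfg \<Rightarrow> 'a cfg \<Rightarrow> real) \<Rightarrow> ('a \<Rightarrow> 'a \<Rightarrow> real)
    \<Rightarrow> real \<Rightarrow> 'a \<Rightarrow> 'a \<Rightarrow> real" where
  "rwProb Vs V \<Lambda> c r t u w = trans Vs V \<Lambda> c r t (dlt u) (dlt w)"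

end

theory Submission
  imports Defs
begin

lemma mpow_bound:
  assumes fin: "finite S" and x: "x \<in> S"
  shows "\<bar>mpow S M k x y\<bar> \<le> (\<Sum>a\<in>S. \<Sum>b\<in>S. \<bar>M a b\<bar>) ^ k"
  using x
proof (induction k arbitrary: x)
  case 0 then show ?case by simp
next
  case (Suc k)
  let ?K = "\<Sum>a\<in>S. \<Sum>b\<in>S. \<bar>M a b\<bar>"
  have "\<bar>mpow S M (Suc k) x y\<bar> \<le> (\<Sum>z\<in>S. \<bar>M x z\<bar> * \<bar>mpow S M k z y\<bar>)"
    by (simp add: abs_mult sum_abs[THEN order_trans])
  also have "\<dots> \<le> (\<Sum>z\<in>S. \<bar>M x z\<bar> * ?K ^ k)"
    by (intro sum_mono mult_left_mono Suc.IH) auto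
  also have "\<dots> = (\<Sum>z\<in>S. \<bar>M x z\<bar>) * ?K ^ k" by (simp add: sum_distrib_right)
  also have "(\<Sum>z\<in>S. \<bar>M x z\<bar>) \<le> ?K"
    using member_le_sum[of x S "\<lambda>a. \<Sum>b\<in>S. \<bar>M a b\<bar>"] Suc.prems fin
    by (simp add: sum_nonneg)
  then have "(\<Sum>z\<in>S. \<bar>M x z\<bar>) * ?K ^ k \<le> ?K * ?K ^ k"
    by (intro mult_right_mono) (auto simp: sum_nonneg)
  finally show ?case by simp
qed

lemma summable_mpow:
  assumes fin: "finite S" and x: "x \<in> S"
  shows "summable (\<lambda>k. \<bar>t ^ k / fact k * mpow S M k x y\<bar>)"
proof -
  let ?K = "\<Sum>a\<in>S. \<Sum>b\<in>S. \<bar>M a b\<bar>"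
  have s: "summable (\<lambda>k. (\<bar>t\<bar> * ?K) ^ k / fact k)"
    using summable_exp[of "\<bar>t\<bar> * ?K"] by (simp add: divide_inverse mult.commute)
  show ?thesis
  proof (rule summable_comparison_test[OF _ s], intro exI allI impI)
    fix k :: nat
    have "\<bar>t ^ k / fact k * mpow S M k x y\<bar> = \<bar>t\<bar> ^ k / fact k * \<bar>mpow S M k x y\<bar>"
      by (simp add: abs_mult power_abs)
    also have "\<dots> \<le> \<bar>t\<bar> ^ k / fact k * ?K ^ k"
      by (intro mult_left_mono mpow_bound fin x) auto
    finally show "norm \<bar>t ^ k / fact k * mpow S M k x y\<bar> \<le> (\<bar>t\<bar> * ?K) ^ k / fact k"
      by (simp add: power_mult_distrib)
  qed
qed

lemma summable_mpow':
  assumes fin: "finite S" and x: "x \<in> S"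
  shows "summable (\<lambda>k. t ^ k / fact k * mpow S M k x y)"
  by (rule summable_rabs_cancel[OF summable_mpow[OF assms]])

lemma mpow_Suc_right:
  assumes fin: "finite S" and x: "x \<in> S" and y: "y \<in> S"
  shows "mpow S M (Suc k) x y = (\<Sum>z\<in>S. mpow S M k x z * M z y)"
  using x
proof (induction k arbitrary: x)
  case 0
  have "(\<Sum>z\<in>S. mpow S M 0 x z * M z y) = (\<Sum>z\<in>S. if z = x then M x y else 0)"
    by (rule sum.cong) auto
  also have "\<dots> = M x y" using fin 0 by simp
  also have "M x y = (\<Sum>z\<in>S. if z = y then M x z else 0)" using fin y by simp
  also have "\<dots> = mpow S M (Suc 0) x y" by (simp; rule sum.cong; simp)
  finally show ?case by simp
next
  case (Suc k)
  have "mpow S M (Suc (Suc k)) x y = (\<Sum>w\<in>S. M x w * (\<Sum>z\<in>S. mpow S M k w z * M z y))"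
    using Suc.IH by (simp cong: sum.cong)
  also have "\<dots> = (\<Sum>z\<in>S. (\<Sum>w\<in>S. M x w * mpow S M k w z) * M z y)"
    unfolding sum_distrib_left sum_distrib_right mult.assoc by (rule sum.swap)
  finally show ?case by simp
qed

lemma mpow_rowsum:
  assumes fin: "finite S" and x: "x \<in> S" and rs: "\<forall>a\<in>S. (\<Sum>b\<in>S. M a b) = 0"
  shows "(\<Sum>z\<in>S. mpow S M k x z) = (if k = 0 then 1 else 0)"
  using x
proof (induction k arbitrary: x)
  case 0 then show ?case using fin by simp
next
  case (Suc k)
  have "(\<Sum>z\<in>S. mpow S M (Suc k) x z) = (\<Sum>w\<in>S. M x w * (\<Sum>z\<in>S. mpow S M k w z))"
    unfolding sum_distrib_left by (simp add: sum.swap[of "\<lambda>z w. M x w * mpow S M k w z"])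
  also have "\<dots> = (\<Sum>w\<in>S. M x w * (if k = 0 then 1 else 0))"
    using Suc.IH by simp
  also have "\<dots> = 0" using rs Suc.prems by (simp add: sum_distrib_right[symmetric])
  finally show ?case by simp
qed


lemma binom_step:
  fixes b :: "nat \<Rightarrow> real" and \<alpha> :: real
  shows "(\<Sum>j\<le>Suc n. of_nat (Suc n choose j) * \<alpha> ^ (Suc n - j) * b j)
       = (\<Sum>j\<le>n. of_nat (n choose j) * \<alpha> ^ (n - j) * b (Suc j))
         + \<alpha> * (\<Sum>j\<le>n. of_nat (n choose j) * \<alpha> ^ (n - j) * b j)"
proof -
  have L: "(\<Sum>j\<le>Suc n. of_nat (Suc n choose j) * \<alpha> ^ (Suc n - j) * b j)
     = \<alpha> ^ Suc n * b 0 + (\<Sum>j\<le>n. of_nat (n choose j) * \<alpha> ^ (n - j) * b (Suc j))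
       + (\<Sum>j\<le>n. of_nat (n choose Suc j) * \<alpha> ^ (n - j) * b (Suc j))"
    by (subst sum.atMost_Suc_shift) (simp add: ring_distribs sum.distrib)
  have "\<alpha> * (\<Sum>j\<le>n. of_nat (n choose j) * \<alpha> ^ (n - j) * b j)
      = (\<Sum>j\<le>n. of_nat (n choose j) * \<alpha> ^ (Suc n - j) * b j)"
    unfolding sum_distrib_left
    by (rule sum.cong) (auto simp: Suc_diff_le)
  also have "\<dots> = (\<Sum>j\<le>Suc n. of_nat (n choose j) * \<alpha> ^ (Suc n - j) * b j)"
    by simp
  also have "\<dots> = \<alpha> ^ Suc n * b 0 + (\<Sum>j\<le>n. of_nat (n choose Suc j) * \<alpha> ^ (n - j) * b (Suc j))"
    by (subst sum.atMost_Suc_shift) simp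
  finally show ?thesis using L by simp
qed

lemma mpow_binom:
  assumes fin: "finite S" and x: "x \<in> S"
  shows "mpow S Q n x y = (\<Sum>j\<le>n. of_nat (n choose j) * (-c) ^ (n - j)
            * mpow S (\<lambda>a b. Q a b + (if a = b then c else 0)) j x y)"
  using x
proof (induction n arbitrary: x)
  case 0 then show ?case by simp
next
  case (Suc n)
  define B where "B = (\<lambda>a b. Q a b + (if a = b then c else 0))"
  have "mpow S Q (Suc n) x y = (\<Sum>z\<in>S. (B x z - (if x = z then c else 0)) * mpow S Q n z y)"
    by (simp add: B_def)
  also have "\<dots> = (\<Sum>z\<in>S. B x z * mpow S Q n z y) - c * mpow S Q n x y"
  proof -
    have "(\<Sum>z\<in>S. (if x = z then c else 0) * mpow S Q n z y) = (\<Sum>z\<in>S. if x = z then c * mpow S Q n z y else 0)"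
      by (rule sum.cong) auto
    also have "\<dots> = c * mpow S Q n x y" using fin Suc.prems by simp
    finally show ?thesis by (simp add: left_diff_distrib sum_subtractf)
  qed
  also have "(\<Sum>z\<in>S. B x z * mpow S Q n z y)
      = (\<Sum>z\<in>S. B x z * (\<Sum>j\<le>n. of_nat (n choose j) * (-c) ^ (n - j) * mpow S B j z y))"
    using Suc.IH by (simp add: B_def)
  also have "\<dots> = (\<Sum>j\<le>n. of_nat (n choose j) * (-c) ^ (n - j) * mpow S B (Suc j) x y)"
    by (simp add: sum_distrib_left sum_distrib_right sum.swap[of _ S] mult_ac)
  finally have "mpow S Q (Suc n) x y = (\<Sum>j\<le>n. of_nat (n choose j) * (-c) ^ (n - j) * mpow S B (Suc j) x y)
       + (-c) * (\<Sum>j\<le>n. of_nat (n choose j) * (-c) ^ (n - j) * mpow S B j x y)"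
    using Suc.IH[OF Suc.prems] by (simp add: B_def)
  also have "\<dots> = (\<Sum>j\<le>Suc n. of_nat (Suc n choose j) * (-c) ^ (Suc n - j) * mpow S B j x y)"
    by (rule binom_step[symmetric])
  finally show ?case by (simp add: B_def)
qed


lemma exp_series_real: "exp (x::real) = (\<Sum>i. x ^ i / fact i)"
  using exp_converges[of x] by (simp add: sums_iff divide_inverse mult.commute)

lemma summable_norm_exp_real: "summable (\<lambda>i. norm ((x::real) ^ i / fact i))"
  using summable_norm_exp[of x] by (simp add: divide_inverse mult.commute)

lemma expM_factor:
  assumes fin: "finite S" and x: "x \<in> S"
  shows "expM S Q t x y = exp (-c*t) * expM S (\<lambda>a b. Q a b + (if a = b then c else 0)) t x y"
proof -
  define B where "B = (\<lambda>a b. Q a b + (if a = b then c else 0))"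
  define a where "a = (\<lambda>k. t ^ k / fact k * mpow S B k x y)"
  define e where "e = (\<lambda>i. (-c*t) ^ i / fact i)"
  have sa: "summable (\<lambda>k. norm (a k))"
    unfolding a_def real_norm_def by (rule summable_mpow[OF fin x])
  have se: "summable (\<lambda>k. norm (e k))"
    unfolding e_def by (rule summable_norm_exp_real)
  have "exp (-c*t) * expM S B t x y = (\<Sum>k. a k) * (\<Sum>k. e k)"
    by (simp add: exp_series_real expM_def a_def e_def)
  also have "\<dots> = (\<Sum>k. \<Sum>i\<le>k. a i * e (k - i))"
    by (rule Cauchy_product[OF sa se])
  also have "\<dots> = (\<Sum>k. t ^ k / fact k * mpow S Q k x y)"
  proof (rule suminf_cong)
    fix k
    have "t ^ k / fact k * mpow S Q k x y
        = (\<Sum>j\<le>k. t ^ k / fact k * (of_nat (k choose j) * (-c) ^ (k - j) * mpow S B j x y))"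
      unfolding mpow_binom[OF fin x, of Q k y c] B_def sum_distrib_left ..
    also have "\<dots> = (\<Sum>i\<le>k. a i * e (k - i))"
    proof (rule sum.cong)
      fix j assume "j \<in> {..k}"
      then have jk: "j \<le> k" by simp
      have tk: "t ^ k = t ^ j * t ^ (k - j)"
        using jk by (simp add: power_add[symmetric])
      show "t ^ k / fact k * (of_nat (k choose j) * (-c) ^ (k - j) * mpow S B j x y) = a j * e (k - j)"
        unfolding a_def e_def binomial_fact[OF jk] tk power_mult_distrib
        by (simp add: field_simps)
    qed simp
    finally show "(\<Sum>i\<le>k. a i * e (k - i)) = t ^ k / fact k * mpow S Q k x y" by simp
  qed
  finally show ?thesis by (simp add: expM_def B_def)
qed

lemma expM_nonneg:
  assumes fin: "finite S" and x: "x \<in> S" and t: "t \<ge> 0"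
    and Qoff: "\<forall>a\<in>S. \<forall>b\<in>S. a \<noteq> b \<longrightarrow> Q a b \<ge> 0"
  shows "expM S Q t x y \<ge> 0"
proof -
  define c where "c = (\<Sum>a\<in>S. \<bar>Q a a\<bar>)"
  define B where "B = (\<lambda>a b. Q a b + (if a = b then c else 0))"
  have Bnn: "B a b \<ge> 0" if "a \<in> S" "b \<in> S" for a b
  proof (cases "a = b")
    case True
    have "\<bar>Q a a\<bar> \<le> c" unfolding c_def
      using member_le_sum[of a S "\<lambda>a. \<bar>Q a a\<bar>"] that fin by simp
    then show ?thesis using True by (simp add: B_def)
  next
    case False then show ?thesis using Qoff that by (simp add: B_def)
  qed
  have mnn: "mpow S B k a b \<ge> 0" if "a \<in> S" for k a b
    using that
  proof (induction k arbitrary: a)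
    case 0 then show ?case by simp
  next
    case (Suc k) then show ?case by (simp add: sum_nonneg Bnn)
  qed
  have "expM S B t x y \<ge> 0"
    unfolding expM_def
    by (intro suminf_nonneg summable_mpow'[OF fin x] mult_nonneg_nonneg mnn x) (simp_all add: t)
  then show ?thesis
    using expM_factor[OF fin x, of Q t y c] by (simp add: B_def)
qed

lemma expM_rowsum:
  assumes fin: "finite S" and x: "x \<in> S" and rs: "\<forall>a\<in>S. (\<Sum>b\<in>S. Q a b) = 0"
  shows "(\<Sum>z\<in>S. expM S Q t x z) = 1"
proof -
  have "(\<Sum>z\<in>S. expM S Q t x z) = (\<Sum>k. \<Sum>z\<in>S. t ^ k / fact k * mpow S Q k x z)"
    unfolding expM_def by (rule suminf_sum[symmetric]) (rule summable_mpow'[OF fin x])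
  also have "\<dots> = (\<Sum>k. if k = 0 then 1 else 0)"
  proof (rule suminf_cong)
    fix k
    have "(\<Sum>z\<in>S. t ^ k / fact k * mpow S Q k x z) = t ^ k / fact k * (\<Sum>z\<in>S. mpow S Q k x z)"
      by (simp add: sum_distrib_left)
    then show "(\<Sum>z\<in>S. t ^ k / fact k * mpow S Q k x z) = (if k = 0 then 1 else 0)"
      using mpow_rowsum[OF fin x rs, of k] by simp
  qed
  also have "\<dots> = 1"
    using sums_single[of 0 "\<lambda>_. 1::real"] by (simp add: sums_iff)
  finally show ?thesis .
qed

lemma expM_le1:
  assumes fin: "finite S" and x: "x \<in> S" and y: "y \<in> S" and t: "t \<ge> 0"
    and Qoff: "\<forall>a\<in>S. \<forall>b\<in>S. a \<noteq> b \<longrightarrow> Q a b \<ge> 0"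
    and rs: "\<forall>a\<in>S. (\<Sum>b\<in>S. Q a b) = 0"
  shows "expM S Q t x y \<le> 1"
proof -
  have "expM S Q t x y \<le> (\<Sum>z\<in>S. expM S Q t x z)"
    by (rule member_le_sum) (auto intro: expM_nonneg[OF fin x t Qoff] simp: y fin)
  then show ?thesis using expM_rowsum[OF fin x rs] by simp
qed

lemma expM_deriv:
  assumes fin: "finite S" and x: "x \<in> S" and y: "y \<in> S"
  shows "((\<lambda>t. expM S Q t x y) has_real_derivative (\<Sum>z\<in>S. Q z y * expM S Q t x z)) (at t)"
proof -
  define cf where "cf = (\<lambda>k. mpow S Q k x y / fact k)"
  have eq: "(\<lambda>t. expM S Q t x y) = (\<lambda>t. \<Sum>n. cf n * t ^ n)"
    by (simp add: expM_def cf_def field_simps)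
  have sm: "summable (\<lambda>n. cf n * u ^ n)" for u
    using summable_mpow'[OF fin x, of u Q y] by (simp add: cf_def field_simps)
  have "(\<Sum>n. diffs cf n * t ^ n) = (\<Sum>n. \<Sum>z\<in>S. Q z y * (t ^ n / fact n * mpow S Q n x z))"
  proof (rule suminf_cong)
    fix n
    have nz: "of_nat (Suc n) \<noteq> (0::real)" by simp
    have "diffs cf n = mpow S Q (Suc n) x y / fact n"
      unfolding diffs_def cf_def fact_Suc
      by (simp only: times_divide_eq_right nonzero_mult_divide_mult_cancel_left[OF nz])
    then have "diffs cf n * t ^ n = t ^ n / fact n * mpow S Q (Suc n) x y"
      by simp
    also have "\<dots> = (\<Sum>z\<in>S. Q z y * (t ^ n / fact n * mpow S Q n x z))"
      unfolding mpow_Suc_right[OF fin x y] sum_distrib_left by (simp add: mult_ac)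
    finally show "diffs cf n * t ^ n = (\<Sum>z\<in>S. Q z y * (t ^ n / fact n * mpow S Q n x z))" .
  qed
  also have "\<dots> = (\<Sum>z\<in>S. \<Sum>n. Q z y * (t ^ n / fact n * mpow S Q n x z))"
    by (rule suminf_sum) (intro summable_mult summable_mpow'[OF fin x])
  also have "\<dots> = (\<Sum>z\<in>S. Q z y * expM S Q t x z)"
    by (rule sum.cong[OF refl]) (simp only: expM_def suminf_mult[OF summable_mpow'[OF fin x]])
  finally have d: "(\<Sum>n. diffs cf n * t ^ n) = (\<Sum>z\<in>S. Q z y * expM S Q t x z)" .
  show ?thesis
    unfolding eq d[symmetric] by (rule termdiffs_strong_converges_everywhere[OF sm])
qed

lemma expM_converges:
  assumes fin: "finite S" and x: "x \<in> S" and y: "y \<in> S"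
    and Qoff: "\<forall>a\<in>S. \<forall>b\<in>S. a \<noteq> b \<longrightarrow> Q a b \<ge> 0"
    and rs: "\<forall>a\<in>S. (\<Sum>b\<in>S. Q a b) = 0"
    and absb: "\<forall>b\<in>S. Q y b = 0"
  shows "\<exists>L. ((\<lambda>t. expM S Q t x y) \<longlongrightarrow> L) at_top"
proof -
  define f where "f = (\<lambda>t. expM S Q t x y)"
  have mono: "f s \<le> f u" if "0 \<le> s" "s \<le> u" for s u
  proof (rule DERIV_nonneg_imp_nondecreasing[OF that(2)])
    fix w assume w: "s \<le> w" "w \<le> u"
    have "(\<Sum>z\<in>S. Q z y * expM S Q w x z) \<ge> 0"
    proof (intro sum_nonneg)
      fix z assume z: "z \<in> S"
      have "Q z y \<ge> 0" using Qoff absb z y by (cases "z = y") auto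
      moreover have "expM S Q w x z \<ge> 0" using expM_nonneg[OF fin x _ Qoff] w that by simp
      ultimately show "Q z y * expM S Q w x z \<ge> 0" by simp
    qed
    then show "\<exists>d. (f has_real_derivative d) (at w) \<and> 0 \<le> d"
      unfolding f_def using expM_deriv[OF fin x y] by blast
  qed
  have bd: "f s \<le> 1" if "0 \<le> s" for s
    unfolding f_def by (rule expM_le1[OF fin x y that Qoff rs])
  define L where "L = Sup (f ` {0..})"
  have bdd: "bdd_above (f ` {0..})" using bd by (auto intro!: bdd_aboveI)
  have "(f \<longlongrightarrow> L) at_top"
  proof (rule increasing_tendsto)
    show "\<forall>\<^sub>F n in at_top. f n \<le> L"
      unfolding eventually_at_top_linorder L_def
      by (rule exI[of _ 0]) (auto intro!: cSup_upper bdd)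
  next
    fix a assume "a < L"
    then obtain s where s: "s \<in> {0..}" "a < f s"
      unfolding L_def using less_cSupE[of a "f ` {0..}"] by auto
    show "\<forall>\<^sub>F n in at_top. a < f n"
      unfolding eventually_at_top_linorder
      by (rule exI[of _ s]) (use s mono in \<open>auto intro: less_le_trans\<close>)
  qed
  then show ?thesis unfolding f_def by blast
qed


lemma finite_sector:
  assumes fin: "finite Vs"
  shows "finite (sector Vs V \<Lambda> k)"
proof (rule finite_subset)
  show "sector Vs V \<Lambda> k \<subseteq> {f. \<forall>x. (x \<in> Vs \<longrightarrow> f x \<in> {0..k}) \<and> (x \<notin> Vs \<longrightarrow> f x = 0)}"
  proof (safe)
    fix f x assume f: "f \<in> sector Vs V \<Lambda> k"
    { assume "x \<in> Vs"
      then have "f x \<le> (\<Sum>i\<in>Vs. f i)" using fin by (intro member_le_sum) auto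
      then show "f x \<in> {0..k}" using f by (simp add: sector_def) }
    { assume "x \<notin> Vs" then show "f x = 0" using f by (simp add: sector_def ConfSpace_def) }
  qed
  show "finite {f. \<forall>x. (x \<in> Vs \<longrightarrow> f x \<in> {0..k}) \<and> (x \<notin> Vs \<longrightarrow> f x = (0::nat))}"
    by (rule finite_set_of_finite_funs) (auto simp: fin)
qed

lemma genMat_rowsum:
  assumes "finite S" "a \<in> S"
  shows "(\<Sum>b\<in>S. genMat Vs V c r S a b) = 0"
proof -
  have "(\<Sum>b\<in>S. genMat Vs V c r S a b) = genMat Vs V c r S a a + (\<Sum>b\<in>S - {a}. genMat Vs V c r S a b)"
    using assms by (simp add: sum.remove)
  also have "(\<Sum>b\<in>S - {a}. genMat Vs V c r S a b) = (\<Sum>b\<in>S - {a}. rateAbs Vs V c r a b)"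
    by (rule sum.cong) (auto simp: genMat_def)
  finally show ?thesis by (simp add: genMat_def)
qed

lemma dlt_inj: "dlt u = dlt w \<longleftrightarrow> u = w"
  by (metis dlt_def one_neq_zero)

lemma sum_dlt: "finite Vs \<Longrightarrow> u \<in> Vs \<Longrightarrow> (\<Sum>i\<in>Vs. dlt u i) = 1"
  by (simp add: dlt_def)

locale setting =
  fixes Vs V :: "'a set" and \<Lambda> :: "nat set"
    and c :: "'a cfg \<Rightarrow> 'a cfg \<Rightarrow> real" and r :: "'a \<Rightarrow> 'a \<Rightarrow> real"
  assumes fin: "finite Vs" and sub: "V \<subseteq> Vs"
    and Lam_down: "\<forall>k\<in>\<Lambda>. \<forall>m\<le>k. m \<in> \<Lambda>"
    and c_nonneg: "\<forall>\<eta>\<in>ConfSpace V V \<Lambda>. \<forall>\<xi>. c \<eta> \<xi> \<ge> 0"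
    and c_cons: "\<forall>\<eta>\<in>ConfSpace V V \<Lambda>. \<forall>\<xi>. c \<eta> \<xi> \<noteq> 0 \<longrightarrow>
                   \<xi> \<in> ConfSpace V V \<Lambda> \<and> (\<Sum>i\<in>V. \<xi> i) = (\<Sum>i\<in>V. \<eta> i)"
    and r_nonneg: "\<forall>i\<in>V. \<forall>j\<in>Vs - V. r i j \<ge> 0"
    and consistent: "\<forall>f \<eta>. \<eta> \<in> ConfSpace Vs V \<Lambda> \<longrightarrow>
                       genAbs Vs V \<Lambda> c r (Aop Vs f) \<eta> = Aop Vs (genAbs Vs V \<Lambda> c r f) \<eta>"
begin

abbreviation "CS \<equiv> ConfSpace Vs V \<Lambda>"
abbreviation "Sec \<eta> \<equiv> sector Vs V \<Lambda> (\<Sum>i\<in>Vs. \<eta> i)"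
abbreviation "Qm S \<equiv> genMat Vs V c r S"

definition P :: "nat \<Rightarrow> ('a cfg \<Rightarrow> real) \<Rightarrow> 'a cfg \<Rightarrow> real" where
  "P k f \<eta> = (\<Sum>\<xi>\<in>Sec \<eta>. mpow (Sec \<eta>) (Qm (Sec \<eta>)) k \<eta> \<xi> * f \<xi>)"

lemma finS: "finite (sector Vs V \<Lambda> k)" by (rule finite_sector[OF fin])

lemma CS_Sec: "\<eta> \<in> CS \<Longrightarrow> \<eta> \<in> Sec \<eta>" by (simp add: sector_def)

lemma Sec_same: "\<xi> \<in> Sec \<eta> \<Longrightarrow> Sec \<xi> = Sec \<eta>" by (simp add: sector_def)

lemma Sec_CS: "\<xi> \<in> Sec \<eta> \<Longrightarrow> \<xi> \<in> CS" by (simp add: sector_def)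

lemma minus_CS:
  assumes "\<eta> \<in> CS" "x \<in> Vs" "\<eta> x > 0"
  shows "(\<lambda>k. \<eta> k - dlt x k) \<in> CS"
  using assms Lam_down unfolding ConfSpace_def by auto

lemma genAbs_eq:
  assumes "\<eta> \<in> CS"
  shows "genAbs Vs V \<Lambda> c r h \<eta> = (\<Sum>\<xi>\<in>Sec \<eta>. Qm (Sec \<eta>) \<eta> \<xi> * h \<xi>)"
proof -
  let ?S = "Sec \<eta>"
  have e: "\<eta> \<in> ?S" using CS_Sec[OF assms] .
  have "(\<Sum>\<xi>\<in>?S. Qm ?S \<eta> \<xi> * h \<xi>) = Qm ?S \<eta> \<eta> * h \<eta> + (\<Sum>\<xi>\<in>?S - {\<eta>}. Qm ?S \<eta> \<xi> * h \<xi>)"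
    using e finS by (simp add: sum.remove)
  also have "(\<Sum>\<xi>\<in>?S - {\<eta>}. Qm ?S \<eta> \<xi> * h \<xi>) = (\<Sum>\<xi>\<in>?S - {\<eta>}. rateAbs Vs V c r \<eta> \<xi> * h \<xi>)"
    by (rule sum.cong) (auto simp: genMat_def)
  also have "Qm ?S \<eta> \<eta> * h \<eta> = - (\<Sum>\<xi>\<in>?S - {\<eta>}. rateAbs Vs V c r \<eta> \<xi> * h \<eta>)"
    by (simp add: genMat_def sum_distrib_right)
  finally have 1: "(\<Sum>\<xi>\<in>?S. Qm ?S \<eta> \<xi> * h \<xi>) = (\<Sum>\<xi>\<in>?S - {\<eta>}. rateAbs Vs V c r \<eta> \<xi> * (h \<xi> - h \<eta>))"
    by (simp add: right_diff_distrib sum_subtractf)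
  have "genAbs Vs V \<Lambda> c r h \<eta> = rateAbs Vs V c r \<eta> \<eta> * (h \<eta> - h \<eta>) + (\<Sum>\<xi>\<in>?S - {\<eta>}. rateAbs Vs V c r \<eta> \<xi> * (h \<xi> - h \<eta>))"
    unfolding genAbs_def using e finS by (simp add: sum.remove)
  then show ?thesis using 1 by simp
qed

lemma genAbs_cong:
  assumes "\<eta> \<in> CS" "\<And>\<xi>. \<xi> \<in> Sec \<eta> \<Longrightarrow> h \<xi> = h' \<xi>"
  shows "genAbs Vs V \<Lambda> c r h \<eta> = genAbs Vs V \<Lambda> c r h' \<eta>"
  using assms CS_Sec[OF assms(1)] unfolding genAbs_def by (intro sum.cong) auto

lemma P_0:
  assumes "\<eta> \<in> CS" shows "P 0 f \<eta> = f \<eta>"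
proof -
  have "P 0 f \<eta> = (\<Sum>\<xi>\<in>Sec \<eta>. if \<xi> = \<eta> then f \<eta> else 0)"
    unfolding P_def by (rule sum.cong) auto
  then show ?thesis using CS_Sec[OF assms] finS by simp
qed

lemma P_Suc:
  assumes "\<eta> \<in> CS"
  shows "P (Suc k) f \<eta> = genAbs Vs V \<Lambda> c r (P k f) \<eta>"
proof -
  let ?S = "Sec \<eta>"
  have "P (Suc k) f \<eta> = (\<Sum>\<xi>\<in>?S. (\<Sum>z\<in>?S. Qm ?S \<eta> z * mpow ?S (Qm ?S) k z \<xi>) * f \<xi>)"
    by (simp add: P_def)
  also have "\<dots> = (\<Sum>z\<in>?S. Qm ?S \<eta> z * (\<Sum>\<xi>\<in>?S. mpow ?S (Qm ?S) k z \<xi> * f \<xi>))"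
    unfolding sum_distrib_right sum_distrib_left mult.assoc by (rule sum.swap)
  also have "\<dots> = (\<Sum>z\<in>?S. Qm ?S \<eta> z * P k f z)"
    by (rule sum.cong[OF refl]) (simp add: P_def Sec_same)
  also have "\<dots> = genAbs Vs V \<Lambda> c r (P k f) \<eta>"
    by (rule genAbs_eq[OF assms, symmetric])
  finally show ?thesis .
qed

lemma Aop_cong_pos:
  assumes "\<And>x. x \<in> Vs \<Longrightarrow> \<eta> x > 0 \<Longrightarrow> g (\<lambda>k. \<eta> k - dlt x k) = g' (\<lambda>k. \<eta> k - dlt x k)"
  shows "Aop Vs g \<eta> = Aop Vs g' \<eta>"
  unfolding Aop_def
proof (rule sum.cong[OF refl])
  fix x assume "x \<in> Vs"
  then show "real (\<eta> x) * g (\<lambda>k. \<eta> k - dlt x k) = real (\<eta> x) * g' (\<lambda>k. \<eta> k - dlt x k)"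
    using assms[of x] by (cases "\<eta> x = 0") auto
qed

lemma P_A:
  assumes "\<eta> \<in> CS"
  shows "P k (Aop Vs f) \<eta> = Aop Vs (P k f) \<eta>"
  using assms
proof (induction k arbitrary: \<eta>)
  case 0
  then show ?case
    by (simp add: P_0) (rule Aop_cong_pos, simp add: P_0 minus_CS)
next
  case (Suc k)
  have "P (Suc k) (Aop Vs f) \<eta> = genAbs Vs V \<Lambda> c r (P k (Aop Vs f)) \<eta>"
    by (rule P_Suc[OF Suc.prems])
  also have "\<dots> = genAbs Vs V \<Lambda> c r (Aop Vs (P k f)) \<eta>"
    by (rule genAbs_cong[OF Suc.prems]) (rule Suc.IH[OF Sec_CS])
  also have "\<dots> = Aop Vs (genAbs Vs V \<Lambda> c r (P k f)) \<eta>"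
    using consistent Suc.prems by blast
  also have "\<dots> = Aop Vs (P (Suc k) f) \<eta>"
    by (rule Aop_cong_pos) (simp add: P_Suc minus_CS Suc.prems)
  finally show ?case .
qed

lemma summable_P:
  assumes "\<eta> \<in> CS"
  shows "summable (\<lambda>k. t ^ k / fact k * P k f \<eta>)"
proof -
  have "summable (\<lambda>k. \<Sum>\<xi>\<in>Sec \<eta>. t ^ k / fact k * mpow (Sec \<eta>) (Qm (Sec \<eta>)) k \<eta> \<xi> * f \<xi>)"
    by (intro summable_sum summable_mult2 summable_mpow' finS CS_Sec assms)
  then show ?thesis by (simp add: P_def sum_distrib_left mult.assoc)
qed

lemma expect_P:
  assumes "\<eta> \<in> CS"
  shows "expect Vs V \<Lambda> c r t \<eta> f = (\<Sum>k. t ^ k / fact k * P k f \<eta>)"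
proof -
  have "expect Vs V \<Lambda> c r t \<eta> f
      = (\<Sum>\<xi>\<in>Sec \<eta>. \<Sum>k. t ^ k / fact k * mpow (Sec \<eta>) (Qm (Sec \<eta>)) k \<eta> \<xi> * f \<xi>)"
    unfolding expect_def Defs.trans_def Let_def expM_def
    by (rule sum.cong[OF refl]) (rule suminf_mult2[OF summable_mpow'[OF finS CS_Sec[OF assms]]])
  also have "\<dots> = (\<Sum>k. \<Sum>\<xi>\<in>Sec \<eta>. t ^ k / fact k * mpow (Sec \<eta>) (Qm (Sec \<eta>)) k \<eta> \<xi> * f \<xi>)"
    by (rule suminf_sum[symmetric]) (intro summable_mult2 summable_mpow' finS CS_Sec assms)
  also have "\<dots> = (\<Sum>k. t ^ k / fact k * P k f \<eta>)"
    by (simp add: P_def sum_distrib_left mult.assoc)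
  finally show ?thesis .
qed

lemma expect_A:
  assumes "\<eta> \<in> CS"
  shows "expect Vs V \<Lambda> c r t \<eta> (Aop Vs f) = Aop Vs (\<lambda>\<zeta>. expect Vs V \<Lambda> c r t \<zeta> f) \<eta>"
proof -
  have "expect Vs V \<Lambda> c r t \<eta> (Aop Vs f) = (\<Sum>k. t ^ k / fact k * Aop Vs (P k f) \<eta>)"
    by (simp add: expect_P[OF assms] P_A[OF assms])
  also have "\<dots> = (\<Sum>k. \<Sum>x\<in>Vs. real (\<eta> x) * (t ^ k / fact k * P k f (\<lambda>i. \<eta> i - dlt x i)))"
    by (simp add: Aop_def sum_distrib_left mult_ac)
  also have "\<dots> = (\<Sum>x\<in>Vs. \<Sum>k. real (\<eta> x) * (t ^ k / fact k * P k f (\<lambda>i. \<eta> i - dlt x i)))"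
  proof (rule suminf_sum)
    fix x assume x: "x \<in> Vs"
    show "summable (\<lambda>k. real (\<eta> x) * (t ^ k / fact k * P k f (\<lambda>i. \<eta> i - dlt x i)))"
    proof (cases "\<eta> x = 0")
      case True then show ?thesis by simp
    next
      case False
      then show ?thesis using summable_P[OF minus_CS[OF assms x]] by (intro summable_mult) auto
    qed
  qed
  also have "\<dots> = Aop Vs (\<lambda>\<zeta>. \<Sum>k. t ^ k / fact k * P k f \<zeta>) \<eta>"
  proof -
    have "(\<Sum>k. real (\<eta> x) * (t ^ k / fact k * P k f (\<lambda>i. \<eta> i - dlt x i)))
        = real (\<eta> x) * (\<Sum>k. t ^ k / fact k * P k f (\<lambda>i. \<eta> i - dlt x i))" if x: "x \<in> Vs" for x
    proof (cases "\<eta> x = 0")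
      case True then show ?thesis by simp
    next
      case False
      then show ?thesis using summable_P[OF minus_CS[OF assms x]] by (intro suminf_mult) auto
    qed
    then show ?thesis unfolding Aop_def by (intro sum.cong) auto
  qed
  also have "\<dots> = Aop Vs (\<lambda>\<zeta>. expect Vs V \<Lambda> c r t \<zeta> f) \<eta>"
    by (rule Aop_cong_pos) (simp add: expect_P minus_CS assms)
  finally show ?thesis .
qed

lemma expect_Apow:
  assumes "\<eta> \<in> CS"
  shows "expect Vs V \<Lambda> c r t \<eta> ((Aop Vs ^^ m) g) = (Aop Vs ^^ m) (\<lambda>\<zeta>. expect Vs V \<Lambda> c r t \<zeta> g) \<eta>"
  using assms
proof (induction m arbitrary: \<eta>)
  case 0 then show ?case by simp
next
  case (Suc m)
  have "expect Vs V \<Lambda> c r t \<eta> ((Aop Vs ^^ Suc m) g)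
      = Aop Vs (\<lambda>\<zeta>. expect Vs V \<Lambda> c r t \<zeta> ((Aop Vs ^^ m) g)) \<eta>"
    by (simp add: expect_A[OF Suc.prems])
  also have "\<dots> = Aop Vs ((Aop Vs ^^ m) (\<lambda>\<zeta>. expect Vs V \<Lambda> c r t \<zeta> g)) \<eta>"
    by (rule Aop_cong_pos) (simp add: Suc.IH minus_CS Suc.prems)
  finally show ?case by simp
qed

end


lemma Apow_formula:
  assumes fin: "finite Vs"
  shows "(\<forall>i. i \<notin> Vs \<longrightarrow> \<eta> i = 0) \<Longrightarrow> (\<Sum>i\<in>Vs. \<eta> i) = Suc m \<Longrightarrow>
     (Aop Vs ^^ m) h \<eta> = fact m * (\<Sum>u\<in>Vs. real (\<eta> u) * h (dlt u))"
proof (induction m arbitrary: \<eta>)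
  case 0
  obtain w where w: "w \<in> Vs" "\<eta> w > 0"
  proof (rule ccontr)
    assume "\<not> thesis"
    then have "\<forall>i\<in>Vs. \<eta> i = 0" using that by auto
    then show False using 0 by simp
  qed
  have "\<eta> w + (\<Sum>i\<in>Vs - {w}. \<eta> i) = 1"
    using 0 w fin by (simp add: sum.remove)
  then have ew: "\<eta> w = 1" and r0: "(\<Sum>i\<in>Vs - {w}. \<eta> i) = 0"
    using w by auto
  have rest: "\<forall>i\<in>Vs - {w}. \<eta> i = 0" using r0 fin by simp
  have eta: "\<eta> = dlt w"
  proof
    fix i show "\<eta> i = dlt w i"
      using ew rest 0 by (cases "i \<in> Vs") (auto simp: dlt_def)
  qed
  have "(\<Sum>u\<in>Vs. real (\<eta> u) * h (dlt u)) = (\<Sum>u\<in>Vs. if u = w then h (dlt w) else 0)"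
    unfolding eta by (rule sum.cong) (auto simp: dlt_def)
  then show ?case using w fin eta by simp
next
  case (Suc m)
  define H where "H = (\<lambda>u. h (dlt u))"
  define T where "T = (\<Sum>u\<in>Vs. real (\<eta> u) * H u)"
  have tm: "real (\<eta> x) * (Aop Vs ^^ m) h (\<lambda>k. \<eta> k - dlt x k) = real (\<eta> x) * (fact m * (T - H x))"
    if x: "x \<in> Vs" for x
  proof (cases "\<eta> x = 0")
    case True then show ?thesis by simp
  next
    case False
    have le: "dlt x i \<le> \<eta> i" for i using False by (simp add: dlt_def)
    have "(\<Sum>i\<in>Vs. \<eta> i - dlt x i) + (\<Sum>i\<in>Vs. dlt x i) = (\<Sum>i\<in>Vs. \<eta> i)"
      by (simp add: sum.distrib[symmetric] le)
    then have s: "(\<Sum>i\<in>Vs. \<eta> i - dlt x i) = Suc m"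
      using Suc.prems sum_dlt[OF fin x] by simp
    have z: "\<forall>i. i \<notin> Vs \<longrightarrow> \<eta> i - dlt x i = 0" using Suc.prems by simp
    have "(\<Sum>u\<in>Vs. real (\<eta> u - dlt x u) * h (dlt u)) = (\<Sum>u\<in>Vs. real (\<eta> u) * H u - (if u = x then H x else 0))"
    proof (rule sum.cong[OF refl])
      fix u assume "u \<in> Vs"
      have ge1: "Suc 0 \<le> \<eta> x" using False by simp
      show "real (\<eta> u - dlt x u) * h (dlt u) = real (\<eta> u) * H u - (if u = x then H x else 0)"
        using ge1 by (cases "u = x") (auto simp: of_nat_diff H_def dlt_def left_diff_distrib)
    qed
    also have "\<dots> = T - H x" using fin x by (simp add: sum_subtractf T_def)
    finally show ?thesis using Suc.IH[OF z s] by simp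
  qed
  have N: "(\<Sum>x\<in>Vs. real (\<eta> x)) = real (Suc (Suc m))"
    using Suc.prems by (simp flip: of_nat_sum)
  have "(Aop Vs ^^ Suc m) h \<eta> = (\<Sum>x\<in>Vs. real (\<eta> x) * (fact m * (T - H x)))"
    by (simp add: Aop_def tm)
  also have "\<dots> = fact m * ((\<Sum>x\<in>Vs. real (\<eta> x)) * T - T)"
  proof -
    have "(\<Sum>x\<in>Vs. real (\<eta> x) * (fact m * (T - H x)))
        = fact m * ((\<Sum>x\<in>Vs. real (\<eta> x)) * T - (\<Sum>x\<in>Vs. real (\<eta> x) * H x))"
      by (simp add: sum_distrib_left sum_distrib_right right_diff_distrib sum_subtractf mult_ac)
    then show ?thesis by (simp add: T_def)
  qed
  also have "\<dots> = fact (Suc m) * T"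
    unfolding N fact_Suc by (simp add: algebra_simps)
  finally show ?case by (simp add: T_def H_def)
qed

lemma phi_Cons: "phi (a # xs) u = (if a = u then 1 else 0) + phi xs u"
  by (simp add: phi_def)

lemma phi_sum:
  assumes "finite Vs"
  shows "set xs \<subseteq> Vs \<Longrightarrow> (\<Sum>u\<in>Vs. real (phi xs u) * F u) = (\<Sum>j<length xs. F (xs ! j))"
proof (induction xs)
  case Nil then show ?case by (simp add: phi_def)
next
  case (Cons a xs)
  have "(\<Sum>u\<in>Vs. real (phi (a # xs) u) * F u) = (\<Sum>u\<in>Vs. (if u = a then F a else 0) + real (phi xs u) * F u)"
    by (rule sum.cong[OF refl]) (auto simp: phi_Cons distrib_right)
  also have "\<dots> = F a + (\<Sum>u\<in>Vs. real (phi xs u) * F u)"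
    using Cons.prems assms by (simp add: sum.distrib)
  moreover have "(\<Sum>j<length (a#xs). F ((a#xs)!j)) = F a + (\<Sum>j<length xs. F (xs!j))"
    by (simp only: length_Cons sum.lessThan_Suc_shift nth_Cons_0 nth_Cons_Suc)
  ultimately show ?case using Cons by simp
qed

context setting
begin

lemma rateAbs_nonneg:
  assumes "a \<in> CS" shows "rateAbs Vs V c r a b \<ge> 0"
proof -
  have "restr V a \<in> ConfSpace V V \<Lambda>" using assms by (auto simp: restr_def ConfSpace_def)
  then have "rateL V c a b \<ge> 0" using c_nonneg by (simp add: rateL_def)
  moreover have "rateH Vs V r a b \<ge> 0"
    unfolding rateH_def using r_nonneg by (intro sum_nonneg) auto
  ultimately show ?thesis by (simp add: rateAbs_def)
qed

lemma rateAbs_abs: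
  assumes zero: "\<forall>i\<in>V. (0::nat) \<in> \<Lambda>" and v: "v \<in> Vs - V" and ne: "\<zeta> \<noteq> dlt v"
  shows "rateAbs Vs V c r (dlt v) \<zeta> = 0"
proof -
  have H: "rateH Vs V r (dlt v) \<zeta> = 0"
    unfolding rateH_def using v by (intro sum.neutral ballI) (auto simp: dlt_def)
  have r0: "restr V (dlt v) = (\<lambda>i. 0)" using v by (auto simp: restr_def dlt_def)
  have z0: "(\<lambda>i. 0::nat) \<in> ConfSpace V V \<Lambda>" using zero by (simp add: ConfSpace_def)
  have finV: "finite V" using fin sub finite_subset by blast
  have L: "rateL V c (dlt v) \<zeta> = 0"
  proof (cases "\<forall>i. i \<notin> V \<longrightarrow> \<zeta> i = dlt v i")
    case True
    show ?thesis
    proof (rule ccontr)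
      assume "rateL V c (dlt v) \<zeta> \<noteq> 0"
      then have "c (\<lambda>i. 0) (restr V \<zeta>) \<noteq> 0" using True r0 by (simp add: rateL_def)
      then have "(\<Sum>i\<in>V. restr V \<zeta> i) = 0" using c_cons z0 by force
      then have "\<forall>i\<in>V. \<zeta> i = 0" using finV by (simp add: restr_def)
      then have "\<zeta> = dlt v" using True v by (intro ext) (auto simp: dlt_def)
      then show False using ne by simp
    qed
  next
    case False then show ?thesis by (simp only: rateL_def if_not_P[OF False] if_False)
  qed
  show ?thesis using H L by (simp add: rateAbs_def)
qed

lemma rw_converges:
  assumes zero: "\<forall>i\<in>V. (0::nat) \<in> \<Lambda>" and v: "v \<in> Vs - V"
    and u: "u \<in> Vs" and uCS: "dlt u \<in> CS"
  shows "\<exists>L. ((\<lambda>t. rwProb Vs V \<Lambda> c r t u v) \<longlongrightarrow> L) at_top"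
proof -
  define S1 where "S1 = sector Vs V \<Lambda> 1"
  have secu: "Sec (dlt u) = S1" using sum_dlt[OF fin u] by (simp add: S1_def)
  have xu: "dlt u \<in> S1" using uCS secu CS_Sec by force
  have vCS: "dlt v \<in> CS" using v zero by (auto simp: ConfSpace_def dlt_def)
  have yv: "dlt v \<in> S1" using vCS sum_dlt[OF fin, of v] v by (simp add: S1_def sector_def)
  have eq: "rwProb Vs V \<Lambda> c r t u v = expM S1 (Qm S1) t (dlt u) (dlt v)" for t
    by (simp add: rwProb_def Defs.trans_def secu)
  have Qoff: "\<forall>a\<in>S1. \<forall>b\<in>S1. a \<noteq> b \<longrightarrow> Qm S1 a b \<ge> 0"
    by (auto simp: genMat_def S1_def sector_def intro!: rateAbs_nonneg)
  have rs: "\<forall>a\<in>S1. (\<Sum>b\<in>S1. Qm S1 a b) = 0"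
    unfolding S1_def using genMat_rowsum[OF finS] by blast
  have absb: "\<forall>b\<in>S1. Qm S1 (dlt v) b = 0"
    using rateAbs_abs[OF zero v] by (auto simp: genMat_def)
  show ?thesis unfolding eq
    using expM_converges[OF _ xu yv Qoff rs absb] finS by (simp add: S1_def)
qed

end

theorem corollary5p6:
  fixes Vs V :: "'a set" and \<Lambda> :: "nat set"
    and c :: "'a cfg \<Rightarrow> 'a cfg \<Rightarrow> real" and r :: "'a \<Rightarrow> 'a \<Rightarrow> real"
    and xs :: "'a list" and v :: 'a
  assumes fin: "finite Vs" and sub: "V \<subseteq> Vs"
    and Lam_down: "\<forall>k\<in>\<Lambda>. \<forall>m\<le>k. m \<in> \<Lambda>"
    and c_nonneg: "\<forall>\<eta>\<in>ConfSpace V V \<Lambda>. \<forall>\<xi>. c \<eta> \<xi> \<ge> 0"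
    and c_cons: "\<forall>\<eta>\<in>ConfSpace V V \<Lambda>. \<forall>\<xi>. c \<eta> \<xi> \<noteq> 0 \<longrightarrow>
                   \<xi> \<in> ConfSpace V V \<Lambda> \<and> (\<Sum>i\<in>V. \<xi> i) = (\<Sum>i\<in>V. \<eta> i)"
    and r_nonneg: "\<forall>i\<in>V. \<forall>j\<in>Vs - V. r i j \<ge> 0"
    and consistent: "\<forall>f \<eta>. \<eta> \<in> ConfSpace Vs V \<Lambda> \<longrightarrow>
                       genAbs Vs V \<Lambda> c r (Aop Vs f) \<eta> = Aop Vs (genAbs Vs V \<Lambda> c r f) \<eta>"
    and xs_in: "set xs \<subseteq> Vs" and phi_in: "phi xs \<in> ConfSpace Vs V \<Lambda>"
    and v_abs: "v \<in> Vs - V"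
  shows "\<exists>p :: nat \<Rightarrow> real.
           (\<forall>j<length xs. ((\<lambda>t. rwProb Vs V \<Lambda> c r t (xs ! j) v) \<longlongrightarrow> p j) at_top) \<and>
           ((\<lambda>t. expect Vs V \<Lambda> c r t (phi xs) (\<lambda>\<xi>. real (\<xi> v)))
              \<longlongrightarrow> (\<Sum>j<length xs. p j)) at_top"
proof -
  interpret S: setting Vs V \<Lambda> c r
    by (rule setting.intro[OF fin sub Lam_down c_nonneg c_cons r_nonneg consistent])
  have zero: "\<forall>i\<in>V. (0::nat) \<in> \<Lambda>"
    using phi_in Lam_down by (auto simp: ConfSpace_def)
  have uCS: "dlt u \<in> ConfSpace Vs V \<Lambda>" if u: "u \<in> set xs" for u
  proof -
    have "phi xs u \<noteq> 0" using u by (simp add: phi_def filter_empty_conv)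
    then have "u \<in> V \<Longrightarrow> (1::nat) \<in> \<Lambda>"
      using phi_in Lam_down by (auto simp: ConfSpace_def)
    then show ?thesis using u xs_in zero by (auto simp: ConfSpace_def dlt_def)
  qed
  have conv: "\<exists>L. ((\<lambda>t. rwProb Vs V \<Lambda> c r t (xs ! j) v) \<longlongrightarrow> L) at_top" if j: "j < length xs" for j
    using S.rw_converges[OF zero v_abs _ uCS] j xs_in nth_mem by blast
  define p where "p = (\<lambda>j. SOME L. ((\<lambda>t. rwProb Vs V \<Lambda> c r t (xs ! j) v) \<longlongrightarrow> L) at_top)"
  have pj: "((\<lambda>t. rwProb Vs V \<Lambda> c r t (xs ! j) v) \<longlongrightarrow> p j) at_top" if "j < length xs" for j
    unfolding p_def using someI_ex[OF conv[OF that]] .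
  have zout: "\<forall>i. i \<notin> Vs \<longrightarrow> phi xs i = 0" using phi_in by (simp add: ConfSpace_def)
  have len: "(\<Sum>i\<in>Vs. phi xs i) = length xs"
  proof -
    have "real (\<Sum>i\<in>Vs. phi xs i) = real (length xs)"
      using phi_sum[OF fin xs_in, of "\<lambda>_. 1"] by simp
    then show ?thesis by (simp only: of_nat_eq_iff)
  qed
  have ident: "expect Vs V \<Lambda> c r t (phi xs) (\<lambda>\<xi>. real (\<xi> v)) = (\<Sum>j<length xs. rwProb Vs V \<Lambda> c r t (xs ! j) v)" for t
  proof (cases "length xs")
    case 0
    have "expect Vs V \<Lambda> c r t (phi xs) (\<lambda>\<xi>. real (\<xi> v)) = 0"
      unfolding expect_def
    proof (rule sum.neutral, rule ballI)
      fix \<xi> assume "\<xi> \<in> sector Vs V \<Lambda> (\<Sum>i\<in>Vs. phi xs i)"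
      then have "(\<Sum>i\<in>Vs. \<xi> i) = 0" using len 0 by (simp add: sector_def)
      then have "\<xi> v = 0" using fin v_abs by simp
      then show "Defs.trans Vs V \<Lambda> c r t (phi xs) \<xi> * real (\<xi> v) = 0" by simp
    qed
    then show ?thesis using 0 by simp
  next
    case (Suc m)
    define g where "g = (\<lambda>\<zeta>. if \<zeta> = dlt v then 1 else (0::real))"
    have gsum: "(\<Sum>u\<in>Vs. real (\<xi> u) * g (dlt u)) = real (\<xi> v)" for \<xi> :: "'a cfg"
    proof -
      have "(\<Sum>u\<in>Vs. real (\<xi> u) * g (dlt u)) = (\<Sum>u\<in>Vs. if u = v then real (\<xi> v) else 0)"
        by (rule sum.cong[OF refl]) (auto simp: g_def dlt_inj)
      then show ?thesis using fin v_abs by simp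
    qed
    have A1: "real (\<xi> v) = (Aop Vs ^^ m) g \<xi> / fact m"
      if "\<xi> \<in> sector Vs V \<Lambda> (\<Sum>i\<in>Vs. phi xs i)" for \<xi>
    proof -
      have "\<forall>i. i \<notin> Vs \<longrightarrow> \<xi> i = 0" "(\<Sum>i\<in>Vs. \<xi> i) = Suc m"
        using that len Suc by (auto simp: sector_def ConfSpace_def)
      from Apow_formula[OF fin this] show ?thesis by (simp add: gsum)
    qed
    have "expect Vs V \<Lambda> c r t (phi xs) (\<lambda>\<xi>. real (\<xi> v))
        = expect Vs V \<Lambda> c r t (phi xs) (\<lambda>\<xi>. (Aop Vs ^^ m) g \<xi> / fact m)"
      unfolding expect_def by (rule sum.cong[OF refl]) (simp add: A1)
    also have "\<dots> = expect Vs V \<Lambda> c r t (phi xs) ((Aop Vs ^^ m) g) / fact m"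
      unfolding expect_def by (simp add: sum_divide_distrib)
    also have "\<dots> = (Aop Vs ^^ m) (\<lambda>\<zeta>. expect Vs V \<Lambda> c r t \<zeta> g) (phi xs) / fact m"
      by (simp add: S.expect_Apow[OF phi_in])
    also have "\<dots> = (\<Sum>u\<in>Vs. real (phi xs u) * expect Vs V \<Lambda> c r t (dlt u) g)"
      using Apow_formula[OF fin zout, of m] len Suc by simp
    also have "\<dots> = (\<Sum>u\<in>Vs. real (phi xs u) * rwProb Vs V \<Lambda> c r t u v)"
    proof (rule sum.cong[OF refl])
      fix u assume u: "u \<in> Vs"
      have yv: "dlt v \<in> sector Vs V \<Lambda> 1"
        using zero v_abs sum_dlt[OF fin, of v] by (auto simp: sector_def ConfSpace_def dlt_def)
      have "expect Vs V \<Lambda> c r t (dlt u) g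
          = (\<Sum>\<xi>\<in>sector Vs V \<Lambda> 1. if \<xi> = dlt v then Defs.trans Vs V \<Lambda> c r t (dlt u) (dlt v) else 0)"
        unfolding expect_def sum_dlt[OF fin u] by (rule sum.cong[OF refl]) (simp add: g_def)
      also have "\<dots> = rwProb Vs V \<Lambda> c r t u v"
        using yv S.finS by (simp add: rwProb_def)
      finally show "real (phi xs u) * expect Vs V \<Lambda> c r t (dlt u) g = real (phi xs u) * rwProb Vs V \<Lambda> c r t u v"
        by simp
    qed
    also have "\<dots> = (\<Sum>j<length xs. rwProb Vs V \<Lambda> c r t (xs ! j) v)"
      by (rule phi_sum[OF fin xs_in])
    finally show ?thesis .
  qed
  have "((\<lambda>t. \<Sum>j<length xs. rwProb Vs V \<Lambda> c r t (xs ! j) v) \<longlongrightarrow> (\<Sum>j<length xs. p j)) at_top"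
    by (rule tendsto_sum) (simp add: pj)
  then have "((\<lambda>t. expect Vs V \<Lambda> c r t (phi xs) (\<lambda>\<xi>. real (\<xi> v))) \<longlongrightarrow> (\<Sum>j<length xs. p j)) at_top"
    by (simp add: ident)
  then show ?thesis using pj by blast
qed

end
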